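(* Let $S\subseteq M_n$ and $T\subseteq M_{n'}$ be noncommutative graphs. Then (1) for every $n\times n$ unitary matrix $U$, $\mathcal{H}(S)=\mathcal{H}(U^\dagger SU)$, where $U^\dagger SU=\{U^\dagger AU: A\in S\}$; and (2) $\mathcal{H}(S\oplus T)=\mathcal{H}(S)+\mathcal{H}(T)$, where $S\oplus T=\{A\oplus B: A\in S, B\in T\}\subseteq M_{n+n'}$ is the space of block-diagonal matrices.
   Context: All scalars are complex; $M_n$ denotes complex $n\times n$ matrices. A noncommutative graph is a linear subspace $S\subseteq M_n$ that contains $I_n$ and is closed under conjugate transpose. For a subspace $S\subseteq M_n$, $M_m(S)$ denotes the set of $m\times m$ block matrices $B=[B_{i,j}]_{i,j\in[m]}$ with every block $B_{i,j}\in S$, viewed as elements of $M_{mn}$. The Haemers bound is $\mathcal{H}(S)=\min\{\mathrm{rk}(B):\ m\in\mathbb{N},\ B\in M_m(S),\ \sum_{i=1}^m B_{i,i}=I_n\}$. *)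

theory Defs
  imports "Jordan_Normal_Form.Schur_Decomposition" "Jordan_Normal_Form.DL_Rank"
begin

definition crank :: "complex mat \<Rightarrow> nat" where
  "crank A = vec_space.rank (dim_row A) A"

definition nc_graph :: "nat \<Rightarrow> complex mat set \<Rightarrow> bool" where
  "nc_graph n S \<longleftrightarrow> S \<subseteq> carrier_mat n n \<and> 0\<^sub>m n n \<in> S
     \<and> (\<forall>A\<in>S. \<forall>B\<in>S. A + B \<in> S)
     \<and> (\<forall>c::complex. \<forall>A\<in>S. c \<cdot>\<^sub>m A \<in> S)
     \<and> 1\<^sub>m n \<in> S
     \<and> (\<forall>A\<in>S. mat_adjoint A \<in> S)"

definition block_mat :: "nat \<Rightarrow> nat \<Rightarrow> (nat \<Rightarrow> nat \<Rightarrow> complex mat) \<Rightarrow> complex mat" where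
  "block_mat m n B = mat (m * n) (m * n) (\<lambda>(i, j). B (i div n) (j div n) $$ (i mod n, j mod n))"

definition diag_block_sum :: "nat \<Rightarrow> nat \<Rightarrow> (nat \<Rightarrow> nat \<Rightarrow> complex mat) \<Rightarrow> complex mat" where
  "diag_block_sum m n B = mat n n (\<lambda>(a, b). \<Sum>i<m. B i i $$ (a, b))"

definition haemers :: "nat \<Rightarrow> complex mat set \<Rightarrow> nat" where
  "haemers n S = Inf {crank (block_mat m n B) | m B.
       (\<forall>i<m. \<forall>j<m. B i j \<in> S) \<and> diag_block_sum m n B = 1\<^sub>m n}"

definition unitary_mat :: "nat \<Rightarrow> complex mat \<Rightarrow> bool" where
  "unitary_mat n U \<longleftrightarrow> U \<in> carrier_mat n n \<and> mat_adjoint U * U = 1\<^sub>m n \<and> U * mat_adjoint U = 1\<^sub>m n"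

definition conj_space :: "complex mat \<Rightarrow> complex mat set \<Rightarrow> complex mat set" where
  "conj_space U S = (\<lambda>A. mat_adjoint U * A * U) ` S"

definition dsum_space :: "nat \<Rightarrow> nat \<Rightarrow> complex mat set \<Rightarrow> complex mat set \<Rightarrow> complex mat set" where
  "dsum_space n n' S T = (\<lambda>(A, B). four_block_mat A (0\<^sub>m n n') (0\<^sub>m n' n) B) ` (S \<times> T)"

end

theory Submission
  imports Defs "Jordan_Normal_Form.Matrix_Kernel"
begin

lemma crank_kernel:
  assumes A: "A \<in> carrier_mat k k"
  shows "crank A + kernel.dim k A = k"
proof -
  interpret VS: vec_space "TYPE(complex)" k .
  interpret K: kernel k k A by (unfold_locales, rule A)
  interpret L: linear_map class_ring "module_vec TYPE(complex) k" "module_vec TYPE(complex) k" "\<lambda>v. A *\<^sub>v v"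
  proof (unfold_locales)
    show "(\<lambda>v. A *\<^sub>v v) \<in> LinearCombinations.module_hom class_ring (module_vec TYPE(complex) k) (module_vec TYPE(complex) k)"
      unfolding LinearCombinations.module_hom_def using A
      by (auto simp: module_vec_simps mult_add_distrib_mat_vec mult_mat_vec)
  qed
  have im: "L.imT = VS.col_space A"
    unfolding L.im_def VS.col_space_eq[OF A] using A by (auto simp: module_vec_simps)
  have ker: "L.kerT = mat_kernel A"
    unfolding L.ker_def mat_kernel_def using A by (auto simp: module_vec_simps)
  note rn = L.rank_nullity[OF VS.fin_dim]
  have cr: "crank A = VS.rank A" using A by (simp add: crank_def)
  show ?thesis using rn VS.dim_is_n unfolding cr VS.rank_def
    unfolding im ker VS.col_space_def using A by simp
qed


lemma crank_similar:
  assumes A: "A \<in> carrier_mat k k" and w: "similar_mat_wit A B P Q"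
  shows "crank A = crank B"
proof -
  have B: "B \<in> carrier_mat k k" using similar_mat_witD2[OF A w] by auto
  show ?thesis using crank_kernel[OF A] crank_kernel[OF B] similar_mat_wit_kernel_dim[OF A w] by simp
qed

lemma crank_four_block:
  assumes A: "A \<in> carrier_mat a a" and D: "D \<in> carrier_mat d d"
  shows "crank (four_block_mat A (0\<^sub>m a d) (0\<^sub>m d a) D) = crank A + crank D"
proof -
  have F: "four_block_mat A (0\<^sub>m a d) (0\<^sub>m d a) D \<in> carrier_mat (a+d) (a+d)" using A D by auto
  show ?thesis using crank_kernel[OF A] crank_kernel[OF D] crank_kernel[OF F]
     kernel_four_block_0_mat[OF refl A D] by simp
qed

lemma crank_zero: "crank (0\<^sub>m k k) = 0"
  unfolding crank_def using vec_space.rank_0I by simp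

lemma adj_carrier: "U \<in> carrier_mat a b \<Longrightarrow> mat_adjoint U \<in> carrier_mat b a"
  unfolding mat_adjoint_def by auto

lemma adj_index: "i < dim_col A \<Longrightarrow> j < dim_row A \<Longrightarrow> mat_adjoint A $$ (i,j) = cnj (A $$ (j,i))"
  unfolding mat_adjoint_def by (simp add: mat_of_rows_index)

lemma adj_dims[simp]: "dim_row (mat_adjoint A) = dim_col A" "dim_col (mat_adjoint A) = dim_row A"
  unfolding mat_adjoint_def by auto

lemma adj_adj: "mat_adjoint (mat_adjoint A) = (A :: complex mat)"
proof (rule eq_matI)
  fix i j assume ij: "i < dim_row A" "j < dim_col A"
  have "mat_adjoint (mat_adjoint A) $$ (i,j) = cnj (mat_adjoint A $$ (j,i))"
    by (rule adj_index, use ij in auto)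
  also have "\<dots> = A $$ (i,j)" using ij by (simp add: adj_index)
  finally show "mat_adjoint (mat_adjoint A) $$ (i,j) = A $$ (i,j)" .
qed auto

lemma crank_perm:
  assumes X: "X \<in> carrier_mat N N"
    and st: "\<And>r. r < N \<Longrightarrow> \<sigma> r < N \<and> \<tau> r < N \<and> \<tau> (\<sigma> r) = r \<and> \<sigma> (\<tau> r) = r"
  shows "crank (mat N N (\<lambda>(i,j). X $$ (\<sigma> i, \<sigma> j))) = crank X"
proof -
  define P where "P = mat N N (\<lambda>(i,j). if j = \<sigma> i then (1::complex) else 0)"
  define Q where "Q = mat N N (\<lambda>(i,j). if \<tau> i = j then (1::complex) else 0)"
  have P: "P \<in> carrier_mat N N" and Q: "Q \<in> carrier_mat N N" unfolding P_def Q_def by auto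
  have PX: "(P * X) $$ (i,k) = X $$ (\<sigma> i, k)" if "i < N" "k < N" for i k
  proof -
    have "(P * X) $$ (i,k) = (\<Sum>j\<in>{0..<N}. (if j = \<sigma> i then 1 else 0) * X $$ (j,k))"
      using that X unfolding P_def by (simp add: scalar_prod_def)
    also have "\<dots> = (\<Sum>j\<in>{0..<N}. if j = \<sigma> i then X $$ (j,k) else 0)"
      by (rule sum.cong) auto
    also have "\<dots> = X $$ (\<sigma> i, k)" using st[OF that(1)] by (simp add: sum.delta')
    finally show ?thesis .
  qed
  have PXQ: "P * X * Q = mat N N (\<lambda>(i,j). X $$ (\<sigma> i, \<sigma> j))"
  proof (rule eq_matI)
    fix i j assume ij: "i < dim_row (mat N N (\<lambda>(i,j). X $$ (\<sigma> i, \<sigma> j)))"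
      "j < dim_col (mat N N (\<lambda>(i,j). X $$ (\<sigma> i, \<sigma> j)))"
    hence i: "i < N" and j: "j < N" by auto
    have "(P * X * Q) $$ (i,j) = (\<Sum>l\<in>{0..<N}. (P * X) $$ (i,l) * (if \<tau> l = j then 1 else 0))"
      using i j P X unfolding Q_def by (simp add: scalar_prod_def)
    also have "\<dots> = (\<Sum>l\<in>{0..<N}. if l = \<sigma> j then X $$ (\<sigma> i, l) else 0)"
      by (rule sum.cong, simp, use PX i st j in auto)
    also have "\<dots> = X $$ (\<sigma> i, \<sigma> j)" using st[OF j] by (simp add: sum.delta')
    finally show "(P * X * Q) $$ (i,j) = mat N N (\<lambda>(i,j). X $$ (\<sigma> i, \<sigma> j)) $$ (i,j)"
      using i j by simp
  qed (use P Q X in auto)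
  have PQ: "P * Q = 1\<^sub>m N"
  proof (rule eq_matI)
    fix i j assume "i < dim_row (1\<^sub>m N :: complex mat)" "j < dim_col (1\<^sub>m N :: complex mat)"
    hence i: "i < N" and j: "j < N" by auto
    have "(P * Q) $$ (i,j) = (\<Sum>l\<in>{0..<N}. (if l = \<sigma> i then 1 else 0) * (if \<tau> l = j then 1 else 0))"
      using i j unfolding P_def Q_def by (simp add: scalar_prod_def)
    also have "\<dots> = (\<Sum>l\<in>{0..<N}. if l = \<sigma> i then (if \<tau> l = j then 1 else 0) else 0)"
      by (rule sum.cong) auto
    also have "\<dots> = (if i = j then 1 else 0)" using st[OF i] by (simp add: sum.delta')
    finally show "(P * Q) $$ (i,j) = 1\<^sub>m N $$ (i,j)" using i j by simp
  qed (use P Q in auto)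
  have QP: "Q * P = 1\<^sub>m N"
  proof (rule eq_matI)
    fix i j assume "i < dim_row (1\<^sub>m N :: complex mat)" "j < dim_col (1\<^sub>m N :: complex mat)"
    hence i: "i < N" and j: "j < N" by auto
    have "(Q * P) $$ (i,j) = (\<Sum>l\<in>{0..<N}. (if \<tau> i = l then 1 else 0) * (if j = \<sigma> l then 1 else 0))"
      using i j unfolding P_def Q_def by (simp add: scalar_prod_def)
    also have "\<dots> = (\<Sum>l\<in>{0..<N}. if l = \<tau> i then (if j = \<sigma> l then 1 else 0) else 0)"
      by (rule sum.cong) auto
    also have "\<dots> = (if i = j then 1 else 0)" using st[OF i] by (auto simp add: sum.delta')
    finally show "(Q * P) $$ (i,j) = 1\<^sub>m N $$ (i,j)" using i j by simp
  qed (use P Q in auto)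
  have "similar_mat_wit (mat N N (\<lambda>(i,j). X $$ (\<sigma> i, \<sigma> j))) X P Q"
    unfolding similar_mat_wit_def Let_def using P Q X PQ QP PXQ by auto
  from crank_similar[OF _ this, of N] show ?thesis by auto
qed


lemma idx_lt: "q < m \<Longrightarrow> c < n \<Longrightarrow> q * n + c < m * (n::nat)"
proof -
  assume a: "q < m" "c < n"
  have "q * n + c < Suc q * n" using a by simp
  also have "\<dots> \<le> m * n" using a by (intro mult_le_mono1) simp
  finally show ?thesis .
qed

lemma div_lt: "(l::nat) < m * n \<Longrightarrow> l div n < m"
  by (simp add: less_mult_imp_div_less)

lemma sum_block:
  assumes q: "q < (m::nat)"
  shows "(\<Sum>l\<in>{0..<m*n}. if l div n = q then f l else 0) = (\<Sum>c\<in>{0..<n}. f (q*n + c))"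
proof -
  have "(\<Sum>l\<in>{0..<m*n}. if l div n = q then f l else 0) = (\<Sum>l\<in>{l\<in>{0..<m*n}. l div n = q}. f l)"
    using sum.inter_filter[of "{0..<m*n}" f "\<lambda>l. l div n = q"] by simp
  also have "{l\<in>{0..<m*n}. l div n = q} = (\<lambda>c. q*n + c) ` {0..<n}"
  proof (rule Set.set_eqI, rule iffI)
    fix l assume "l \<in> {l\<in>{0..<m*n}. l div n = q}"
    hence l: "l < m*n" "l div n = q" by auto
    hence "n > 0" by (cases n) auto
    hence "l = q*n + l mod n" "l mod n < n" using l by (auto simp: mult.commute)
    thus "l \<in> (\<lambda>c. q*n + c) ` {0..<n}" by force
  next
    fix l assume "l \<in> (\<lambda>c. q*n + c) ` {0..<n}"
    then obtain c where c0: "c \<in> {0..<n}" "l = q*n+c" by (rule imageE)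
    hence c: "c < n" "l = q*n+c" by auto
    thus "l \<in> {l\<in>{0..<m*n}. l div n = q}" using idx_lt[OF q c(1)] by auto
  qed
  also have "(\<Sum>l\<in>(\<lambda>c. q*n + c) ` {0..<n}. f l) = (\<Sum>c\<in>{0..<n}. f (q*n + c))"
    by (rule sum.reindex_cong[where l="\<lambda>c. q*n + c"]) (auto simp: inj_on_def)
  finally show ?thesis .
qed

lemma block_mat_carrier[simp]: "block_mat m n B \<in> carrier_mat (m*n) (m*n)"
  unfolding block_mat_def by auto

lemma block_mat_dims[simp]: "dim_row (block_mat m n B) = m*n" "dim_col (block_mat m n B) = m*n"
  unfolding block_mat_def by auto

lemma block_mat_index: "r < m*n \<Longrightarrow> s < m*n \<Longrightarrow>
  block_mat m n B $$ (r,s) = B (r div n) (s div n) $$ (r mod n, s mod n)"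
  unfolding block_mat_def by auto

lemma npos: "(r::nat) < m * n \<Longrightarrow> 0 < n"
  by (cases n) auto

lemma bd_left:
  assumes D: "\<And>i. i<m \<Longrightarrow> D i \<in> carrier_mat n n"
    and B: "\<And>i j. i<m \<Longrightarrow> j<m \<Longrightarrow> B i j \<in> carrier_mat n n"
  shows "block_mat m n (\<lambda>i j. if i = j then D i else 0\<^sub>m n n) * block_mat m n B
       = block_mat m n (\<lambda>i j. D i * B i j)"
proof (rule eq_matI)
  fix r s assume "r < dim_row (block_mat m n (\<lambda>i j. D i * B i j))" "s < dim_col (block_mat m n (\<lambda>i j. D i * B i j))"
  hence r: "r < m*n" and s: "s < m*n" by auto
  have n: "0 < n" using npos[OF r] .
  define q where "q = r div n"
  define p where "p = s div n"
  have q: "q < m" and p: "p < m" using div_lt r s unfolding q_def p_def by auto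
  have rm: "r mod n < n" "s mod n < n" using n by auto
  have "(block_mat m n (\<lambda>i j. if i = j then D i else 0\<^sub>m n n) * block_mat m n B) $$ (r,s)
     = (\<Sum>l\<in>{0..<m*n}. (if q = l div n then D (r div n) else 0\<^sub>m n n) $$ (r mod n, l mod n) * B (l div n) p $$ (l mod n, s mod n))"
    using r s by (simp add: scalar_prod_def block_mat_index q_def[symmetric] p_def[symmetric])
  also have "\<dots> = (\<Sum>l\<in>{0..<m*n}. if l div n = q then D q $$ (r mod n, l mod n) * B q p $$ (l mod n, s mod n) else 0)"
    by (rule sum.cong, simp, use rm n q_def p_def in auto)
  also have "\<dots> = (\<Sum>c\<in>{0..<n}. D q $$ (r mod n, c) * B q p $$ (c, s mod n))"
    by (subst sum_block[OF q], rule sum.cong, use n in auto)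
  also have "\<dots> = (D q * B q p) $$ (r mod n, s mod n)"
    using D[OF q] B[OF q p] rm by (simp add: scalar_prod_def)
  also have "\<dots> = block_mat m n (\<lambda>i j. D i * B i j) $$ (r,s)"
    using r s by (simp add: block_mat_index q_def p_def)
  finally show "(block_mat m n (\<lambda>i j. if i = j then D i else 0\<^sub>m n n) * block_mat m n B) $$ (r,s)
     = block_mat m n (\<lambda>i j. D i * B i j) $$ (r,s)" .
qed auto

lemma bd_right:
  assumes E: "\<And>i. i<m \<Longrightarrow> E i \<in> carrier_mat n n"
    and B: "\<And>i j. i<m \<Longrightarrow> j<m \<Longrightarrow> B i j \<in> carrier_mat n n"
  shows "block_mat m n B * block_mat m n (\<lambda>i j. if i = j then E i else 0\<^sub>m n n)
       = block_mat m n (\<lambda>i j. B i j * E j)"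
proof (rule eq_matI)
  fix r s assume "r < dim_row (block_mat m n (\<lambda>i j. B i j * E j))" "s < dim_col (block_mat m n (\<lambda>i j. B i j * E j))"
  hence r: "r < m*n" and s: "s < m*n" by auto
  have n: "0 < n" using npos[OF r] .
  define q where "q = r div n"
  define p where "p = s div n"
  have q: "q < m" and p: "p < m" using div_lt r s unfolding q_def p_def by auto
  have rm: "r mod n < n" "s mod n < n" using n by auto
  have "(block_mat m n B * block_mat m n (\<lambda>i j. if i = j then E i else 0\<^sub>m n n)) $$ (r,s)
     = (\<Sum>l\<in>{0..<m*n}. B q (l div n) $$ (r mod n, l mod n) * (if l div n = p then E (l div n) else 0\<^sub>m n n) $$ (l mod n, s mod n))"
    using r s by (simp add: scalar_prod_def block_mat_index q_def[symmetric] p_def[symmetric])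
  also have "\<dots> = (\<Sum>l\<in>{0..<m*n}. if l div n = p then B q p $$ (r mod n, l mod n) * E p $$ (l mod n, s mod n) else 0)"
    by (rule sum.cong, simp, use rm n q_def p_def in auto)
  also have "\<dots> = (\<Sum>c\<in>{0..<n}. B q p $$ (r mod n, c) * E p $$ (c, s mod n))"
    by (subst sum_block[OF p], rule sum.cong, use n in auto)
  also have "\<dots> = (B q p * E p) $$ (r mod n, s mod n)"
    using E[OF p] B[OF q p] rm by (simp add: scalar_prod_def)
  also have "\<dots> = block_mat m n (\<lambda>i j. B i j * E j) $$ (r,s)"
    using r s by (simp add: block_mat_index q_def p_def)
  finally show "(block_mat m n B * block_mat m n (\<lambda>i j. if i = j then E i else 0\<^sub>m n n)) $$ (r,s)
     = block_mat m n (\<lambda>i j. B i j * E j) $$ (r,s)" .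
qed auto

lemma bd_one: "block_mat m n (\<lambda>i j. if i = j then 1\<^sub>m n else 0\<^sub>m n n) = 1\<^sub>m (m*n)"
proof (rule eq_matI)
  fix r s assume "r < dim_row (1\<^sub>m (m*n) :: complex mat)" "s < dim_col (1\<^sub>m (m*n) :: complex mat)"
  hence r: "r < m*n" and s: "s < m*n" by auto
  have n: "0 < n" using npos[OF r] .
  have "r = s \<longleftrightarrow> r div n = s div n \<and> r mod n = s mod n"
    by (metis div_mult_mod_eq)
  then show "block_mat m n (\<lambda>i j. if i = j then 1\<^sub>m n else 0\<^sub>m n n) $$ (r,s) = 1\<^sub>m (m*n) $$ (r,s)"
    using r s n by (auto simp: block_mat_index)
qed auto


lemma dbs_carrier[simp]: "diag_block_sum m n B \<in> carrier_mat n n"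
  unfolding diag_block_sum_def by auto

lemma dbs_dims[simp]: "dim_row (diag_block_sum m n B) = n" "dim_col (diag_block_sum m n B) = n"
  unfolding diag_block_sum_def by auto

lemma dbs_index: "a < n \<Longrightarrow> b < n \<Longrightarrow> diag_block_sum m n B $$ (a,b) = (\<Sum>i<m. B i i $$ (a,b))"
  unfolding diag_block_sum_def by auto

lemma dbs_0: "diag_block_sum 0 n B = 0\<^sub>m n n"
  by (rule eq_matI, auto simp: dbs_index)

lemma dbs_Suc: "B m m \<in> carrier_mat n n \<Longrightarrow> diag_block_sum (Suc m) n B = diag_block_sum m n B + B m m"
  by (rule eq_matI, auto simp: dbs_index)

lemma dbs_conj:
  assumes P: "P \<in> carrier_mat n n" and Q: "Q \<in> carrier_mat n n"
    and B: "\<And>i. i < m \<Longrightarrow> B i i \<in> carrier_mat n n"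
  shows "diag_block_sum m n (\<lambda>i j. P * B i j * Q) = P * diag_block_sum m n B * Q"
  using B
proof (induction m)
  case 0
  show ?case unfolding dbs_0 using P Q by simp
next
  case (Suc m)
  have Bm: "B m m \<in> carrier_mat n n" using Suc.prems by auto
  have "diag_block_sum (Suc m) n (\<lambda>i j. P * B i j * Q) = diag_block_sum m n (\<lambda>i j. P * B i j * Q) + P * B m m * Q"
    by (rule dbs_Suc, use P Q Bm in auto)
  also have "\<dots> = P * diag_block_sum m n B * Q + P * B m m * Q" using Suc by auto
  also have "\<dots> = P * (diag_block_sum m n B + B m m) * Q"
  proof -
    have X: "diag_block_sum m n B \<in> carrier_mat n n" by simp
    have "P * (diag_block_sum m n B + B m m) = P * diag_block_sum m n B + P * B m m"
      by (rule mult_add_distrib_mat[OF P X Bm])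
    moreover have "(P * diag_block_sum m n B + P * B m m) * Q = P * diag_block_sum m n B * Q + P * B m m * Q"
      by (rule add_mult_distrib_mat, use P X Bm Q in auto)
    ultimately show ?thesis by simp
  qed
  also have "\<dots> = P * diag_block_sum (Suc m) n B * Q" using dbs_Suc[of B m n, OF Bm] by simp
  finally show ?case .
qed

lemma block_mat_cong: "(\<And>i j. i < m \<Longrightarrow> j < m \<Longrightarrow> B i j = C i j) \<Longrightarrow> block_mat m n B = block_mat m n C"
  unfolding block_mat_def by (rule cong_mat, auto simp: div_lt)

definition hset :: "nat \<Rightarrow> complex mat set \<Rightarrow> nat set" where
  "hset n S = {crank (block_mat m n B) | m B.
       (\<forall>i<m. \<forall>j<m. B i j \<in> S) \<and> diag_block_sum m n B = 1\<^sub>m n}"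

lemma haemers_hset: "haemers n S = Inf (hset n S)"
  unfolding haemers_def hset_def ..

lemma Inf_le_Inf: "(A::nat set) \<noteq> {} \<Longrightarrow> (\<And>x. x \<in> A \<Longrightarrow> \<exists>y\<in>B. y \<le> x) \<Longrightarrow> Inf B \<le> Inf A"
proof -
  assume A: "A \<noteq> {}" and h: "\<And>x. x \<in> A \<Longrightarrow> \<exists>y\<in>B. y \<le> x"
  have "Inf A \<in> A" using A by (rule Inf_nat_def1)
  then obtain y where y: "y \<in> B" "y \<le> Inf A" using h by blast
  have "Inf B \<le> y" using y(1) by (simp add: cInf_lower)
  thus ?thesis using y by simp
qed

lemma hset_nonempty:
  assumes "1\<^sub>m n \<in> S"
  shows "hset n S \<noteq> {}"
proof -
  have "diag_block_sum 1 n (\<lambda>_ _. 1\<^sub>m n) = 1\<^sub>m n"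
    by (rule eq_matI, auto simp: dbs_index)
  hence "crank (block_mat 1 n (\<lambda>_ _. 1\<^sub>m n)) \<in> hset n S"
    unfolding hset_def using assms by blast
  thus ?thesis by auto
qed

lemma haemers_conj_le:
  assumes S: "S \<subseteq> carrier_mat n n" and I: "1\<^sub>m n \<in> S"
    and U: "U \<in> carrier_mat n n" and UU: "mat_adjoint U * U = 1\<^sub>m n" and UU': "U * mat_adjoint U = 1\<^sub>m n"
  shows "haemers n (conj_space U S) \<le> haemers n S"
  unfolding haemers_hset
proof (rule Inf_le_Inf[OF hset_nonempty[OF I]])
  fix x assume "x \<in> hset n S"
  then obtain m B where x: "x = crank (block_mat m n B)" and BS: "\<forall>i<m. \<forall>j<m. B i j \<in> S"
    and d: "diag_block_sum m n B = 1\<^sub>m n" unfolding hset_def by blast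
  have Bc: "B i j \<in> carrier_mat n n" if "i < m" "j < m" for i j using BS S that by auto
  define V where "V = mat_adjoint U"
  have V: "V \<in> carrier_mat n n" unfolding V_def using adj_carrier[OF U] .
  define B' where "B' = (\<lambda>i j. V * B i j * U)"
  have B'S: "\<forall>i<m. \<forall>j<m. B' i j \<in> conj_space U S"
    unfolding B'_def V_def conj_space_def using BS by auto
  have d': "diag_block_sum m n B' = 1\<^sub>m n"
  proof -
    have "diag_block_sum m n B' = V * diag_block_sum m n B * U"
      unfolding B'_def by (rule dbs_conj[OF V U], rule Bc, auto)
    thus ?thesis using d V U UU unfolding V_def by simp
  qed
  define P where "P = block_mat m n (\<lambda>i j. if i = j then V else 0\<^sub>m n n)"
  define Q where "Q = block_mat m n (\<lambda>i j. if i = j then U else 0\<^sub>m n n)"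
  have "P * block_mat m n B = block_mat m n (\<lambda>i j. V * B i j)"
    unfolding P_def by (rule bd_left, use V Bc in auto)
  hence PBQ: "P * block_mat m n B * Q = block_mat m n B'"
    unfolding Q_def B'_def by (simp, subst bd_right, use U V Bc in auto)
  have "P * Q = block_mat m n (\<lambda>i j. V * (if i = j then U else 0\<^sub>m n n))"
    unfolding P_def Q_def by (rule bd_left, use V U in auto)
  also have "\<dots> = block_mat m n (\<lambda>i j. if i = j then 1\<^sub>m n else 0\<^sub>m n n)"
    by (rule block_mat_cong, use V U UU in \<open>auto simp: V_def\<close>)
  finally have PQ: "P * Q = 1\<^sub>m (m*n)" using bd_one by simp
  have "Q * P = block_mat m n (\<lambda>i j. U * (if i = j then V else 0\<^sub>m n n))"
    unfolding P_def Q_def by (rule bd_left, use V U in auto)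
  also have "\<dots> = block_mat m n (\<lambda>i j. if i = j then 1\<^sub>m n else 0\<^sub>m n n)"
    by (rule block_mat_cong, use V U UU' in \<open>auto simp: V_def\<close>)
  finally have QP: "Q * P = 1\<^sub>m (m*n)" using bd_one by simp
  have "similar_mat_wit (block_mat m n B') (block_mat m n B) P Q"
    unfolding similar_mat_wit_def Let_def using PQ QP PBQ unfolding P_def Q_def by auto
  hence "crank (block_mat m n B') = x" unfolding x by (rule crank_similar[OF block_mat_carrier])
  moreover have "crank (block_mat m n B') \<in> hset n (conj_space U S)"
    unfolding hset_def using B'S d' by blast
  ultimately show "\<exists>y\<in>hset n (conj_space U S). y \<le> x" by auto
qed


lemma dm_simp: "(a::nat) < k \<Longrightarrow> (q * k + a) div k = q \<and> (q * k + a) mod k = a"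
  by auto

lemma fb_idx: "A \<in> carrier_mat n n \<Longrightarrow> D \<in> carrier_mat n' n' \<Longrightarrow> a < n+n' \<Longrightarrow> b < n+n' \<Longrightarrow>
  four_block_mat A (0\<^sub>m n n') (0\<^sub>m n' n) D $$ (a,b) =
   (if a < n then if b < n then A$$(a,b) else 0 else if b < n then 0 else D $$ (a-n, b-n))"
  by auto

lemma block_dsum_crank:
  assumes D: "\<And>i j. i < M \<Longrightarrow> j < M \<Longrightarrow> D i j = four_block_mat (B i j) (0\<^sub>m n n') (0\<^sub>m n' n) (C i j)"
    and B: "\<And>i j. i < M \<Longrightarrow> j < M \<Longrightarrow> B i j \<in> carrier_mat n n"
    and C: "\<And>i j. i < M \<Longrightarrow> j < M \<Longrightarrow> C i j \<in> carrier_mat n' n'"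
  shows "crank (block_mat M (n+n') D) = crank (block_mat M n B) + crank (block_mat M n' C)"
proof -
  define k where "k = n + n'"
  define N where "N = M * k"
  have N: "N = M*n + M*n'" unfolding N_def k_def by (simp add: algebra_simps)
  define \<sigma> where "\<sigma> = (\<lambda>r. if r < M*n then (r div n)*k + r mod n
      else ((r - M*n) div n')*k + (n + (r - M*n) mod n'))"
  define \<tau> where "\<tau> = (\<lambda>x. if x mod k < n then (x div k)*n + x mod k
      else M*n + ((x div k)*n' + (x mod k - n)))"
  define X where "X = block_mat M k D"
  have X: "X \<in> carrier_mat N N" unfolding X_def N_def by simp
  have sig1: "\<sigma> r = (r div n)*k + r mod n \<and> r div n < M \<and> r mod n < n \<and> 0 < n" if "r < M*n" for r
    using that npos[OF that] div_lt[OF that] unfolding \<sigma>_def by auto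
  have sig2: "\<sigma> r = ((r - M*n) div n')*k + (n + (r - M*n) mod n') \<and> (r - M*n) div n' < M
     \<and> (r - M*n) mod n' < n' \<and> 0 < n'" if "\<not> r < M*n" "r < N" for r
  proof -
    have r': "r - M*n < M*n'" using that N by auto
    show ?thesis using that npos[OF r'] div_lt[OF r'] unfolding \<sigma>_def by auto
  qed
  have st: "\<sigma> r < N \<and> \<tau> r < N \<and> \<tau> (\<sigma> r) = r \<and> \<sigma> (\<tau> r) = r" if r: "r < N" for r
  proof -
    have 1: "\<sigma> r < N"
    proof (cases "r < M*n")
      case True
      with sig1[OF True] show ?thesis unfolding N_def using idx_lt[of "r div n" M "r mod n" k] k_def by auto
    next
      case False
      with sig2[OF False r] show ?thesis unfolding N_def using idx_lt[of "(r - M*n) div n'" M "n + (r - M*n) mod n'" k] k_def by auto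
    qed
    have 2: "\<tau> (\<sigma> r) = r"
    proof (cases "r < M*n")
      case True
      have "r mod n < k" using sig1[OF True] k_def by auto
      with sig1[OF True] show ?thesis unfolding \<tau>_def using dm_simp[of "r mod n" k "r div n"] by simp
    next
      case False
      have "n + (r - M*n) mod n' < k" using sig2[OF False r] k_def by auto
      with sig2[OF False r] False show ?thesis unfolding \<tau>_def
        using dm_simp[of "n + (r - M*n) mod n'" k "(r - M*n) div n'"] by simp
    qed
    have k: "0 < k" using r unfolding N_def by (cases k) auto
    have q: "r div k < M" using r div_lt unfolding N_def by auto
    have a: "r mod k < k" using k by simp
    have 3: "\<tau> r < N \<and> \<sigma> (\<tau> r) = r"
    proof (cases "r mod k < n")
      case True
      have t: "\<tau> r = (r div k)*n + r mod k" unfolding \<tau>_def using True by simp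
      have lt: "\<tau> r < M*n" unfolding t by (rule idx_lt[OF q True])
      have "\<sigma> (\<tau> r) = (r div k) * k + r mod k"
        using sig1[OF lt] unfolding t using dm_simp[OF True, of "r div k"] by simp
      thus ?thesis using lt N by simp
    next
      case False
      have b: "r mod k - n < n'" using a False k_def by auto
      have t: "\<tau> r = M*n + ((r div k)*n' + (r mod k - n))" unfolding \<tau>_def using False by simp
      have lt': "(r div k)*n' + (r mod k - n) < M*n'" by (rule idx_lt[OF q b])
      hence lt: "\<tau> r < N" "\<not> \<tau> r < M*n" unfolding t N by auto
      have "\<sigma> (\<tau> r) = (r div k)*k + (n + (r mod k - n))"
        using sig2[OF lt(2) lt(1)] unfolding t using dm_simp[OF b, of "r div k"] by simp
      also have "\<dots> = r" using False by simp
      finally show ?thesis using lt by simp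
    qed
    show ?thesis using 1 2 3 by simp
  qed
  define Y where "Y = four_block_mat (block_mat M n B) (0\<^sub>m (M*n) (M*n')) (0\<^sub>m (M*n') (M*n)) (block_mat M n' C)"
  have YX: "Y = mat N N (\<lambda>(i,j). X $$ (\<sigma> i, \<sigma> j))"
  proof (rule eq_matI)
    fix r s assume "r < dim_row (mat N N (\<lambda>(i,j). X $$ (\<sigma> i, \<sigma> j)))" "s < dim_col (mat N N (\<lambda>(i,j). X $$ (\<sigma> i, \<sigma> j)))"
    hence r: "r < N" and s: "s < N" by auto
    have sr: "\<sigma> r < N" and ss: "\<sigma> s < N" using st r s by auto
    have Xi: "X $$ (\<sigma> r, \<sigma> s) = D (\<sigma> r div k) (\<sigma> s div k) $$ (\<sigma> r mod k, \<sigma> s mod k)"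
      unfolding X_def using sr ss unfolding N_def by (simp add: block_mat_index)
    show "Y $$ (r,s) = mat N N (\<lambda>(i,j). X $$ (\<sigma> i, \<sigma> j)) $$ (r,s)"
    proof (cases "r < M*n")
      case rT: True
      note R = sig1[OF rT]
      have rk: "r mod n < k" using R k_def by auto
      have sdr: "\<sigma> r div k = r div n" "\<sigma> r mod k = r mod n" using R dm_simp[OF rk] by auto
      show ?thesis
      proof (cases "s < M*n")
        case sT: True
        note S = sig1[OF sT]
        have sk: "s mod n < k" using S k_def by auto
        have sds: "\<sigma> s div k = s div n" "\<sigma> s mod k = s mod n" using S dm_simp[OF sk] by auto
        have i1: "r div n < M" "s div n < M" using R S by auto
        have a1: "r mod n < n + n'" "s mod n < n + n'" using R S by (auto intro: trans_less_add1)
        have Dv: "D (r div n) (s div n) $$ (r mod n, s mod n) = B (r div n) (s div n) $$ (r mod n, s mod n)"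
          unfolding D[OF i1] fb_idx[OF B[OF i1] C[OF i1] a1] using R S by auto
        have rr: "r - M*n < M*n'" "s - M*n < M*n'" if "\<not> r < M*n" "\<not> s < M*n" using r s N that by auto
        have "Y $$ (r,s) = B (r div n) (s div n) $$ (r mod n, s mod n)"
          unfolding Y_def using r s rT sT R S rr unfolding N by (auto simp: block_mat_index)
        thus ?thesis using r s Xi sdr sds Dv by simp
      next
        case sF: False
        note S = sig2[OF sF s]
        have sk: "n + (s - M*n) mod n' < k" using S k_def by auto
        have sds: "\<sigma> s div k = (s - M*n) div n'" "\<sigma> s mod k = n + (s - M*n) mod n'" using S dm_simp[OF sk] by auto
        have i1: "r div n < M" "(s - M*n) div n' < M" using R S by auto
        have a1: "r mod n < n + n'" "n + (s - M*n) mod n' < n + n'" using R S by (auto intro: trans_less_add1)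
        have Dv: "D (r div n) ((s - M*n) div n') $$ (r mod n, n + (s - M*n) mod n') = 0"
          unfolding D[OF i1] fb_idx[OF B[OF i1] C[OF i1] a1] using R S by auto
        have rr: "r - M*n < M*n'" "s - M*n < M*n'" if "\<not> r < M*n" "\<not> s < M*n" using r s N that by auto
        have "Y $$ (r,s) = 0"
          unfolding Y_def using r s rT sF R S rr unfolding N by (auto simp: block_mat_index)
        thus ?thesis using r s Xi sdr sds Dv by simp
      qed
    next
      case rF: False
      note R = sig2[OF rF r]
      have rk: "n + (r - M*n) mod n' < k" using R k_def by auto
      have sdr: "\<sigma> r div k = (r - M*n) div n'" "\<sigma> r mod k = n + (r - M*n) mod n'" using R dm_simp[OF rk] by auto
      show ?thesis
      proof (cases "s < M*n")
        case sT: True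
        note S = sig1[OF sT]
        have sk: "s mod n < k" using S k_def by auto
        have sds: "\<sigma> s div k = s div n" "\<sigma> s mod k = s mod n" using S dm_simp[OF sk] by auto
        have i1: "(r - M*n) div n' < M" "s div n < M" using R S by auto
        have a1: "n + (r - M*n) mod n' < n + n'" "s mod n < n + n'" using R S by (auto intro: trans_less_add1)
        have Dv: "D ((r - M*n) div n') (s div n) $$ (n + (r - M*n) mod n', s mod n) = 0"
          unfolding D[OF i1] fb_idx[OF B[OF i1] C[OF i1] a1] using R S by auto
        have rr: "r - M*n < M*n'" "s - M*n < M*n'" if "\<not> r < M*n" "\<not> s < M*n" using r s N that by auto
        have "Y $$ (r,s) = 0"
          unfolding Y_def using r s rF sT R S rr unfolding N by (auto simp: block_mat_index)
        thus ?thesis using r s Xi sdr sds Dv by simp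
      next
        case sF: False
        note S = sig2[OF sF s]
        have sk: "n + (s - M*n) mod n' < k" using S k_def by auto
        have sds: "\<sigma> s div k = (s - M*n) div n'" "\<sigma> s mod k = n + (s - M*n) mod n'" using S dm_simp[OF sk] by auto
        have r2: "r - M*n < M*n'" "s - M*n < M*n'" using r s N rF sF by auto
        have i1: "(r - M*n) div n' < M" "(s - M*n) div n' < M" using R S by auto
        have a1: "n + (r - M*n) mod n' < n + n'" "n + (s - M*n) mod n' < n + n'" using R S by (auto intro: trans_less_add1)
        have Dv: "D ((r - M*n) div n') ((s - M*n) div n') $$ (n + (r - M*n) mod n', n + (s - M*n) mod n') = C ((r - M*n) div n') ((s - M*n) div n') $$ ((r - M*n) mod n', (s - M*n) mod n')"
          unfolding D[OF i1] fb_idx[OF B[OF i1] C[OF i1] a1] using R S by auto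
        have rr: "r - M*n < M*n'" "s - M*n < M*n'" if "\<not> r < M*n" "\<not> s < M*n" using r s N that by auto
        have "Y $$ (r,s) = C ((r - M*n) div n') ((s - M*n) div n') $$ ((r - M*n) mod n', (s - M*n) mod n')"
          unfolding Y_def using r s rF sF R S rr unfolding N by (auto simp: block_mat_index)
        thus ?thesis using r s Xi sdr sds Dv by simp
      qed
    qed
  qed (auto simp: Y_def N)
  have "crank Y = crank X" unfolding YX by (rule crank_perm[OF X st])
  moreover have "crank Y = crank (block_mat M n B) + crank (block_mat M n' C)"
    unfolding Y_def by (rule crank_four_block) auto
  ultimately show ?thesis unfolding X_def k_def by simp
qed


lemma divshift: "m*n \<le> (r::nat) \<Longrightarrow> 0 < n \<Longrightarrow> r div n = m + (r - m*n) div n \<and> r mod n = (r - m*n) mod n"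
proof -
  assume a: "m*n \<le> r" "0 < n"
  define r' where "r' = r - m*n"
  have r: "r = r' + m*n" using a unfolding r'_def by simp
  show ?thesis unfolding r'_def[symmetric] unfolding r using a by simp
qed

lemma sum_split: "(\<Sum>i<m+(m'::nat). f i) = (\<Sum>i<m. f i) + (\<Sum>i<m'. f (m+i))"
  by (induction m') (auto simp: add.assoc)

lemma crank_pad_left:
  "crank (block_mat (m+m') n (\<lambda>i j. if i < m \<and> j < m then B i j else 0\<^sub>m n n)) = crank (block_mat m n B)"
proof -
  have "block_mat (m+m') n (\<lambda>i j. if i < m \<and> j < m then B i j else 0\<^sub>m n n)
     = four_block_mat (block_mat m n B) (0\<^sub>m (m*n) (m'*n)) (0\<^sub>m (m'*n) (m*n)) (0\<^sub>m (m'*n) (m'*n))"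
  proof (rule eq_matI)
    fix r s assume "r < dim_row (four_block_mat (block_mat m n B) (0\<^sub>m (m*n) (m'*n)) (0\<^sub>m (m'*n) (m*n)) (0\<^sub>m (m'*n) (m'*n)))"
      "s < dim_col (four_block_mat (block_mat m n B) (0\<^sub>m (m*n) (m'*n)) (0\<^sub>m (m'*n) (m*n)) (0\<^sub>m (m'*n) (m'*n)))"
    hence r: "r < (m+m')*n" and s: "s < (m+m')*n" by (auto simp: algebra_simps)
    have n: "0 < n" using npos[OF r] .
    have rd: "r < m*n \<longleftrightarrow> r div n < m" "s < m*n \<longleftrightarrow> s div n < m"
      using div_less_iff_less_mult[OF n] by (auto simp: mult.commute)
    have mo: "r mod n < n" "s mod n < n" using n by auto
    show "block_mat (m+m') n (\<lambda>i j. if i < m \<and> j < m then B i j else 0\<^sub>m n n) $$ (r,s) =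
      four_block_mat (block_mat m n B) (0\<^sub>m (m*n) (m'*n)) (0\<^sub>m (m'*n) (m*n)) (0\<^sub>m (m'*n) (m'*n)) $$ (r,s)"
      using r s rd mo by (auto simp: block_mat_index algebra_simps)
  qed (auto simp: algebra_simps)
  thus ?thesis using crank_four_block[of "block_mat m n B" "m*n" "0\<^sub>m (m'*n) (m'*n)" "m'*n"] crank_zero by simp
qed

lemma crank_pad_right:
  "crank (block_mat (m+m') n (\<lambda>i j. if m \<le> i \<and> m \<le> j then C (i-m) (j-m) else 0\<^sub>m n n)) = crank (block_mat m' n C)"
proof -
  have "block_mat (m+m') n (\<lambda>i j. if m \<le> i \<and> m \<le> j then C (i-m) (j-m) else 0\<^sub>m n n)
     = four_block_mat (0\<^sub>m (m*n) (m*n)) (0\<^sub>m (m*n) (m'*n)) (0\<^sub>m (m'*n) (m*n)) (block_mat m' n C)"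
  proof (rule eq_matI)
    fix r s assume "r < dim_row (four_block_mat (0\<^sub>m (m*n) (m*n)) (0\<^sub>m (m*n) (m'*n)) (0\<^sub>m (m'*n) (m*n)) (block_mat m' n C))"
      "s < dim_col (four_block_mat (0\<^sub>m (m*n) (m*n)) (0\<^sub>m (m*n) (m'*n)) (0\<^sub>m (m'*n) (m*n)) (block_mat m' n C))"
    hence r: "r < (m+m')*n" and s: "s < (m+m')*n" by (auto simp: algebra_simps)
    have n: "0 < n" using npos[OF r] .
    have rd: "r < m*n \<longleftrightarrow> r div n < m" "s < m*n \<longleftrightarrow> s div n < m"
      using div_less_iff_less_mult[OF n] by (auto simp: mult.commute)
    have mo: "r mod n < n" "s mod n < n" using n by auto
    have dr: "r div n = m + (r - m*n) div n \<and> r mod n = (r - m*n) mod n" if "\<not> r < m*n"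
      using divshift[of m n r] that n by simp
    have ds: "s div n = m + (s - m*n) div n \<and> s mod n = (s - m*n) mod n" if "\<not> s < m*n"
      using divshift[of m n s] that n by simp
    have r2: "r - m*n < m'*n" "s - m*n < m'*n" if "\<not> r < m*n" "\<not> s < m*n" using r s that by (auto simp: algebra_simps)
    show "block_mat (m+m') n (\<lambda>i j. if m \<le> i \<and> m \<le> j then C (i-m) (j-m) else 0\<^sub>m n n) $$ (r,s) =
      four_block_mat (0\<^sub>m (m*n) (m*n)) (0\<^sub>m (m*n) (m'*n)) (0\<^sub>m (m'*n) (m*n)) (block_mat m' n C) $$ (r,s)"
    proof (cases "r < m*n \<or> s < m*n")
      case True
      thus ?thesis using r s rd mo by (auto simp: block_mat_index algebra_simps)
    next
      case False
      thus ?thesis using r s rd mo dr ds r2 by (auto simp: block_mat_index algebra_simps)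
    qed
  qed (auto simp: algebra_simps)
  thus ?thesis using crank_four_block[of "0\<^sub>m (m*n) (m*n)" "m*n" "block_mat m' n C" "m'*n"] crank_zero by simp
qed




lemma nc_graph_props:
  assumes "nc_graph n S"
  shows "S \<subseteq> carrier_mat n n" "0\<^sub>m n n \<in> S" "1\<^sub>m n \<in> S"
  using assms unfolding nc_graph_def by auto

lemma one_dsum:
  assumes "nc_graph n S" "nc_graph n' T"
  shows "1\<^sub>m (n+n') \<in> dsum_space n n' S T"
proof -
  have "four_block_mat (1\<^sub>m n) (0\<^sub>m n n') (0\<^sub>m n' n) (1\<^sub>m n') \<in> dsum_space n n' S T"
    unfolding dsum_space_def using nc_graph_props[OF assms(1)] nc_graph_props[OF assms(2)] by force
  thus ?thesis by simp
qed

lemma dsum_ge: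
  assumes S: "nc_graph n S" and T: "nc_graph n' T"
  shows "haemers n S + haemers n' T \<le> haemers (n+n') (dsum_space n n' S T)"
proof -
  have ne: "hset (n+n') (dsum_space n n' S T) \<noteq> {}" by (rule hset_nonempty[OF one_dsum[OF S T]])
  have "Inf (hset (n+n') (dsum_space n n' S T)) \<in> hset (n+n') (dsum_space n n' S T)"
    using ne by (rule Inf_nat_def1)
  then obtain M D where x: "haemers (n+n') (dsum_space n n' S T) = crank (block_mat M (n+n') D)"
    and DS: "\<forall>i<M. \<forall>j<M. D i j \<in> dsum_space n n' S T"
    and d: "diag_block_sum M (n+n') D = 1\<^sub>m (n+n')" unfolding hset_def haemers_hset by blast
  define B where "B = (\<lambda>i j. mat n n (\<lambda>(a,b). D i j $$ (a,b)))"
  define C where "C = (\<lambda>i j. mat n' n' (\<lambda>(a,b). D i j $$ (n+a,n+b)))"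
  have BC: "D i j = four_block_mat (B i j) (0\<^sub>m n n') (0\<^sub>m n' n) (C i j) \<and> B i j \<in> S \<and> C i j \<in> T"
    if ij: "i < M" "j < M" for i j
  proof -
    have "D i j \<in> dsum_space n n' S T" using DS ij by blast
    then obtain p where p: "p \<in> S \<times> T" "D i j = (\<lambda>(A, B). four_block_mat A (0\<^sub>m n n') (0\<^sub>m n' n) B) p"
      unfolding dsum_space_def by (rule imageE)
    obtain A A' where pp: "p = (A, A')" by (cases p)
    have AA: "A \<in> S" "A' \<in> T" "D i j = four_block_mat A (0\<^sub>m n n') (0\<^sub>m n' n) A'"
      using p unfolding pp by auto
    have Ac: "A \<in> carrier_mat n n" "A' \<in> carrier_mat n' n'"
      using AA nc_graph_props(1)[OF S] nc_graph_props(1)[OF T] by auto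
    have "B i j = A" unfolding B_def AA(3) by (rule eq_matI, use Ac in auto)
    moreover have "C i j = A'" unfolding C_def AA(3) by (rule eq_matI, use Ac in auto)
    ultimately show ?thesis using AA by simp
  qed
  have dB: "diag_block_sum M n B = 1\<^sub>m n"
  proof (rule eq_matI)
    fix a b assume "a < dim_row (1\<^sub>m n :: complex mat)" "b < dim_col (1\<^sub>m n :: complex mat)"
    hence ab: "a < n" "b < n" by auto
    have "diag_block_sum M n B $$ (a,b) = (\<Sum>i<M. D i i $$ (a,b))"
      using ab by (simp add: dbs_index B_def)
    also have "\<dots> = diag_block_sum M (n+n') D $$ (a,b)" using ab by (simp add: dbs_index)
    finally show "diag_block_sum M n B $$ (a,b) = 1\<^sub>m n $$ (a,b)" using ab d by simp
  qed auto
  have dC: "diag_block_sum M n' C = 1\<^sub>m n'"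
  proof (rule eq_matI)
    fix a b assume "a < dim_row (1\<^sub>m n' :: complex mat)" "b < dim_col (1\<^sub>m n' :: complex mat)"
    hence ab: "a < n'" "b < n'" by auto
    have "diag_block_sum M n' C $$ (a,b) = (\<Sum>i<M. D i i $$ (n+a,n+b))"
      using ab by (simp add: dbs_index C_def)
    also have "\<dots> = diag_block_sum M (n+n') D $$ (n+a,n+b)" using ab by (simp add: dbs_index)
    finally show "diag_block_sum M n' C $$ (a,b) = 1\<^sub>m n' $$ (a,b)" using ab d by simp
  qed auto
  have eq: "crank (block_mat M (n+n') D) = crank (block_mat M n B) + crank (block_mat M n' C)"
  proof -
    have h1: "\<And>i j. i < M \<Longrightarrow> j < M \<Longrightarrow> D i j = four_block_mat (B i j) (0\<^sub>m n n') (0\<^sub>m n' n) (C i j)"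
      using BC by blast
    have h2: "\<And>i j. i < M \<Longrightarrow> j < M \<Longrightarrow> B i j \<in> carrier_mat n n"
      using BC nc_graph_props(1)[OF S] by blast
    have h3: "\<And>i j. i < M \<Longrightarrow> j < M \<Longrightarrow> C i j \<in> carrier_mat n' n'"
      using BC nc_graph_props(1)[OF T] by blast
    show ?thesis by (rule block_dsum_crank[OF h1 h2 h3])
  qed
  have "crank (block_mat M n B) \<in> hset n S" unfolding hset_def using BC dB by blast
  hence 1: "haemers n S \<le> crank (block_mat M n B)" unfolding haemers_hset by (simp add: cInf_lower)
  have "crank (block_mat M n' C) \<in> hset n' T" unfolding hset_def using BC dC by blast
  hence 2: "haemers n' T \<le> crank (block_mat M n' C)" unfolding haemers_hset by (simp add: cInf_lower)
  show ?thesis using 1 2 eq x by simp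
qed

lemma dsum_le:
  assumes S: "nc_graph n S" and T: "nc_graph n' T"
  shows "haemers (n+n') (dsum_space n n' S T) \<le> haemers n S + haemers n' T"
proof -
  have "Inf (hset n S) \<in> hset n S" using hset_nonempty[OF nc_graph_props(3)[OF S]] by (rule Inf_nat_def1)
  then obtain m B where y: "haemers n S = crank (block_mat m n B)"
    and BS: "\<forall>i<m. \<forall>j<m. B i j \<in> S"
    and dB: "diag_block_sum m n B = 1\<^sub>m n" unfolding hset_def haemers_hset by blast
  have "Inf (hset n' T) \<in> hset n' T" using hset_nonempty[OF nc_graph_props(3)[OF T]] by (rule Inf_nat_def1)
  then obtain m' C where z: "haemers n' T = crank (block_mat m' n' C)"
    and CT: "\<forall>i<m'. \<forall>j<m'. C i j \<in> T"
    and dC: "diag_block_sum m' n' C = 1\<^sub>m n'" unfolding hset_def haemers_hset by blast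
  define B' where "B' = (\<lambda>i j. if i < m \<and> j < m then B i j else 0\<^sub>m n n)"
  define C' where "C' = (\<lambda>i j. if m \<le> i \<and> m \<le> j then C (i-m) (j-m) else 0\<^sub>m n' n')"
  define D where "D = (\<lambda>i j. four_block_mat (B' i j) (0\<^sub>m n n') (0\<^sub>m n' n) (C' i j))"
  have B'S: "B' i j \<in> S" for i j unfolding B'_def using BS nc_graph_props(2)[OF S] by auto
  have C'T: "C' i j \<in> T" if "i < m+m'" "j < m+m'" for i j
    unfolding C'_def using CT nc_graph_props(2)[OF T] that by auto
  have B'c: "B' i j \<in> carrier_mat n n" for i j using B'S nc_graph_props(1)[OF S] by auto
  have C'c: "C' i j \<in> carrier_mat n' n'" if "i < m+m'" "j < m+m'" for i j
    using C'T[OF that] nc_graph_props(1)[OF T] by auto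
  have DS: "\<forall>i<m+m'. \<forall>j<m+m'. D i j \<in> dsum_space n n' S T"
  proof (intro allI impI)
    fix i j assume ij: "i < m+m'" "j < m+m'"
    have "(B' i j, C' i j) \<in> S \<times> T" using B'S C'T[OF ij] by blast
    hence "(\<lambda>(A, B). four_block_mat A (0\<^sub>m n n') (0\<^sub>m n' n) B) (B' i j, C' i j) \<in> dsum_space n n' S T"
      unfolding dsum_space_def by (rule imageI)
    thus "D i j \<in> dsum_space n n' S T" unfolding D_def by simp
  qed
  have dD: "diag_block_sum (m+m') (n+n') D = 1\<^sub>m (n+n')"
  proof (rule eq_matI)
    fix a b assume "a < dim_row (1\<^sub>m (n+n') :: complex mat)" "b < dim_col (1\<^sub>m (n+n') :: complex mat)"
    hence ab: "a < n+n'" "b < n+n'" by auto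
    have e: "D i i $$ (a,b) = (if a < n then if b < n then B' i i $$ (a,b) else 0
          else if b < n then 0 else C' i i $$ (a-n, b-n))" if "i < m+m'" for i
      unfolding D_def by (rule fb_idx[OF B'c C'c[OF that that] ab])
    have "diag_block_sum (m+m') (n+n') D $$ (a,b) = (\<Sum>i<m+m'. D i i $$ (a,b))"
      using ab by (simp add: dbs_index)
    also have "\<dots> = (\<Sum>i<m+m'. (if a < n then if b < n then B' i i $$ (a,b) else 0
          else if b < n then 0 else C' i i $$ (a-n, b-n)))"
      by (rule sum.cong, simp, rule e, simp)
    also have "\<dots> = 1\<^sub>m (n+n') $$ (a,b)"
    proof (cases "a < n \<and> b < n")
      case True
      have "(\<Sum>i<m+m'. B' i i $$ (a,b)) = (\<Sum>i<m. B i i $$ (a,b))"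
        unfolding sum_split B'_def using True by simp
      also have "\<dots> = diag_block_sum m n B $$ (a,b)" using True by (simp add: dbs_index)
      finally show ?thesis using True dB ab by simp
    next
      case False
      show ?thesis
      proof (cases "\<not> a < n \<and> \<not> b < n")
        case True
        have ab': "a - n < n'" "b - n < n'" using ab True by auto
        have "(\<Sum>i<m+m'. C' i i $$ (a-n,b-n)) = (\<Sum>i<m'. C i i $$ (a-n,b-n))"
          unfolding sum_split C'_def using ab' by simp
        also have "\<dots> = diag_block_sum m' n' C $$ (a-n,b-n)" using ab' by (simp add: dbs_index)
        finally show ?thesis using True dC ab ab' by auto
      next
        case F2: False
        thus ?thesis using False ab by auto
      qed
    qed
    finally show "diag_block_sum (m+m') (n+n') D $$ (a,b) = 1\<^sub>m (n+n') $$ (a,b)" .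
  qed auto
  have "crank (block_mat (m+m') (n+n') D) = crank (block_mat (m+m') n B') + crank (block_mat (m+m') n' C')"
    by (rule block_dsum_crank[OF _ B'c C'c]) (simp add: D_def)
  also have "\<dots> = haemers n S + haemers n' T" unfolding y z B'_def C'_def
    by (simp add: crank_pad_left crank_pad_right)
  finally have eq: "crank (block_mat (m+m') (n+n') D) = haemers n S + haemers n' T" .
  have "crank (block_mat (m+m') (n+n') D) \<in> hset (n+n') (dsum_space n n' S T)"
    unfolding hset_def using DS dD by blast
  hence "haemers (n+n') (dsum_space n n' S T) \<le> crank (block_mat (m+m') (n+n') D)"
    unfolding haemers_hset by (simp add: cInf_lower)
  thus ?thesis using eq by simp
qed

lemma conj_props:
  assumes S: "S \<subseteq> carrier_mat n n" and U: "U \<in> carrier_mat n n" and UU: "mat_adjoint U * U = 1\<^sub>m n"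
  shows "conj_space U S \<subseteq> carrier_mat n n" "1\<^sub>m n \<in> S \<Longrightarrow> 1\<^sub>m n \<in> conj_space U S"
proof -
  have V: "mat_adjoint U \<in> carrier_mat n n" using adj_carrier[OF U] .
  show "conj_space U S \<subseteq> carrier_mat n n"
  proof
    fix X assume "X \<in> conj_space U S"
    then obtain A where A: "A \<in> S" "X = mat_adjoint U * A * U" unfolding conj_space_def by blast
    have "A \<in> carrier_mat n n" using A S by blast
    thus "X \<in> carrier_mat n n" unfolding A(2) using V U by (intro mult_carrier_mat) auto
  qed
  assume "1\<^sub>m n \<in> S"
  hence "mat_adjoint U * 1\<^sub>m n * U \<in> conj_space U S" unfolding conj_space_def by (rule imageI)
  moreover have "mat_adjoint U * 1\<^sub>m n * U = 1\<^sub>m n" using V U UU by simp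
  ultimately show "1\<^sub>m n \<in> conj_space U S" by simp
qed

lemma conj_conj:
  assumes S: "S \<subseteq> carrier_mat n n" and U: "U \<in> carrier_mat n n" and UU': "U * mat_adjoint U = 1\<^sub>m n"
  shows "conj_space (mat_adjoint U) (conj_space U S) = S"
proof -
  have V: "mat_adjoint U \<in> carrier_mat n n" using adj_carrier[OF U] .
  have "U * (mat_adjoint U * A * U) * mat_adjoint U = A" if "A \<in> S" for A
  proof -
    have A: "A \<in> carrier_mat n n" using S that by auto
    define W where "W = mat_adjoint U"
    have W: "W \<in> carrier_mat n n" using V unfolding W_def .
    have e1: "U * (W * A * U) = U * (W * A) * U"
      using assoc_mult_mat[OF U mult_carrier_mat[OF W A] U] by simp
    have e2: "U * (W * A) = (U * W) * A" using assoc_mult_mat[OF U W A] by simp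
    have e3: "A * U * W = A * (U * W)" using assoc_mult_mat[OF A U W] by simp
    have "U * (W * A * U) * W = A * U * W" unfolding e1 e2 using UU' A unfolding W_def by simp
    also have "\<dots> = A" unfolding e3 using UU' A unfolding W_def by simp
    finally show ?thesis unfolding W_def .
  qed
  thus ?thesis unfolding conj_space_def image_image adj_adj by simp
qed

theorem mainTheorem8:
  fixes n n' :: nat and S T :: "complex mat set"
  assumes "nc_graph n S" and "nc_graph n' T"
  shows "(\<forall>U. unitary_mat n U \<longrightarrow> haemers n S = haemers n (conj_space U S))
    \<and> haemers (n + n') (dsum_space n n' S T) = haemers n S + haemers n' T"
proof (intro conjI allI impI)
  fix U assume u: "unitary_mat n U"
  hence U: "U \<in> carrier_mat n n" and UU: "mat_adjoint U * U = 1\<^sub>m n" and UU': "U * mat_adjoint U = 1\<^sub>m n"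
    unfolding unitary_mat_def by auto
  note Sp = nc_graph_props[OF assms(1)]
  have 1: "haemers n (conj_space U S) \<le> haemers n S"
    by (rule haemers_conj_le[OF Sp(1) Sp(3) U UU UU'])
  have V: "mat_adjoint U \<in> carrier_mat n n" using adj_carrier[OF U] .
  have 2: "haemers n (conj_space (mat_adjoint U) (conj_space U S)) \<le> haemers n (conj_space U S)"
  proof (rule haemers_conj_le[OF conj_props(1)[OF Sp(1) U UU] conj_props(2)[OF Sp(1) U UU Sp(3)] V])
    show "mat_adjoint (mat_adjoint U) * mat_adjoint U = 1\<^sub>m n" unfolding adj_adj by (rule UU')
    show "mat_adjoint U * mat_adjoint (mat_adjoint U) = 1\<^sub>m n" unfolding adj_adj by (rule UU)
  qed
  show "haemers n S = haemers n (conj_space U S)"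
    using 1 2 conj_conj[OF Sp(1) U UU'] by simp
next
  show "haemers (n + n') (dsum_space n n' S T) = haemers n S + haemers n' T"
    using dsum_le[OF assms] dsum_ge[OF assms] by simp
qed

end
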